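(* Let $R\subseteq\mathbb{R}^d$ and let $y$ lie in the relative interior of $\operatorname{conv}R$. Then for every $x\in R$ there exists an affinely independent set $S\subseteq R$ with at most $d+1$ points such that $x\in S$ and $y$ lies in the relative interior of $\operatorname{conv} S$.
   Context: $\operatorname{conv}$ denotes convex hull; relative interior is the interior relative to the affine hull. *)

theory Defs
  imports "HOL-Analysis.Analysis"
begin

end

theory Submission
  imports Defs
begin

definition good :: "'a::real_vector set \<Rightarrow> 'a \<Rightarrow> 'a \<Rightarrow> 'a set \<Rightarrow> bool" where
  "good R x y P \<longleftrightarrow> finite P \<and> P \<subseteq> R \<and> x \<in> P \<and>
     (\<exists>u. (\<forall>p\<in>P. 0 < u p) \<and> sum u P = 1 \<and> (\<Sum>p\<in>P. u p *\<^sub>R p) = y)"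

lemma reduce:
  fixes P :: "'a::real_vector set"
  assumes g: "good R x y P" and dep: "affine_dependent P"
  shows "\<exists>P'. good R x y P' \<and> card P' < card P"
proof -
  from g obtain u where fin: "finite P" and PR: "P \<subseteq> R" and xP: "x \<in> P"
    and upos: "\<forall>p\<in>P. 0 < u p" and us: "sum u P = 1" and uy: "(\<Sum>p\<in>P. u p *\<^sub>R p) = y"
    unfolding good_def by blast
  obtain m0 where m0s: "sum m0 P = 0" and m0nz: "\<exists>v\<in>P. m0 v \<noteq> 0"
    and m0v: "(\<Sum>v\<in>P. m0 v *\<^sub>R v) = 0"
    using dep affine_dependent_explicit_finite[OF fin] by blast
  define m where "m = (if m0 x \<le> 0 then m0 else (\<lambda>p. - m0 p))"
  have ms: "sum m P = 0" using m0s by (auto simp: m_def sum_negf)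
  have mnz: "\<exists>v\<in>P. m v \<noteq> 0" using m0nz by (auto simp: m_def)
  have mv: "(\<Sum>v\<in>P. m v *\<^sub>R v) = 0" using m0v by (auto simp: m_def sum_negf)
  have mx: "m x \<le> 0" by (auto simp: m_def)
  define Q where "Q = {p\<in>P. 0 < m p}"
  have Qne: "Q \<noteq> {}"
  proof
    assume "Q = {}"
    then have le: "\<forall>p\<in>P. m p \<le> 0" by (auto simp: Q_def not_less)
    then have le': "\<forall>p\<in>P. 0 \<le> - m p" by auto
    have "sum (\<lambda>p. - m p) P = 0" using ms by (simp add: sum_negf)
    then have "\<forall>p\<in>P. - m p = 0"
      using sum_nonneg_eq_0_iff[OF fin, of "\<lambda>p. - m p"] le' by blast
    then have "\<forall>p\<in>P. m p = 0" by simp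
    then show False using mnz by auto
  qed
  have Qfin: "finite Q" using fin by (auto simp: Q_def)
  define t where "t = Min ((\<lambda>p. u p / m p) ` Q)"
  have "t \<in> (\<lambda>p. u p / m p) ` Q"
    using Min_in[of "(\<lambda>p. u p / m p) ` Q"] Qfin Qne unfolding t_def by blast
  then obtain q where qQ: "q \<in> Q" and tq: "t = u q / m q" by blast
  have tle: "\<And>p. p \<in> Q \<Longrightarrow> t \<le> u p / m p" unfolding t_def using Qfin by auto
  have tpos: "t > 0" using qQ upos tq by (auto simp: Q_def)
  define v where "v p = u p - t * m p" for p
  have vnn: "0 \<le> v p" if "p \<in> P" for p
  proof (cases "0 < m p")
    case True
    then have "t \<le> u p / m p" using tle that by (auto simp: Q_def)
    then have "t * m p \<le> u p" using True by (simp add: pos_le_divide_eq)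
    then show ?thesis by (simp add: v_def)
  next
    case False
    then show ?thesis using tpos upos that
      by (simp add: v_def) (smt (verit) mult_nonneg_nonpos)
  qed
  have vq: "v q = 0" using qQ tq by (auto simp: v_def Q_def)
  define P' where "P' = {p\<in>P. 0 < v p}"
  have vx: "0 < v x" using mx tpos upos xP
    by (simp add: v_def) (smt (verit) mult_nonneg_nonpos)
  have sub: "P' \<subseteq> P" by (auto simp: P'_def)
  have zero: "\<forall>p\<in>P - P'. v p = 0" using vnn by (force simp: P'_def)
  have "sum v P = 1"
    by (simp add: v_def sum_subtractf us sum_distrib_left[symmetric] ms)
  then have s1: "sum v P' = 1"
    using sum.mono_neutral_left[OF fin sub zero] by simp
  have "(\<Sum>p\<in>P. v p *\<^sub>R p) = y"
  proof -
    have "(\<Sum>p\<in>P. v p *\<^sub>R p) = (\<Sum>p\<in>P. u p *\<^sub>R p) - t *\<^sub>R (\<Sum>p\<in>P. m p *\<^sub>R p)"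
      by (simp add: v_def scaleR_diff_left sum_subtractf scaleR_sum_right)
    then show ?thesis using uy mv by simp
  qed
  then have s2: "(\<Sum>p\<in>P'. v p *\<^sub>R p) = y"
    using sum.mono_neutral_left[OF fin sub, of "\<lambda>p. v p *\<^sub>R p"] zero by simp
  have "good R x y P'"
    unfolding good_def using fin sub PR vx xP s1 s2
    by (intro conjI exI[of _ v]) (auto simp: P'_def intro: finite_subset)
  moreover have "card P' < card P"
  proof -
    have "q \<notin> P'" using vq by (simp add: P'_def)
    then have "P' \<subset> P" using sub qQ by (auto simp: Q_def)
    then show ?thesis using fin by (rule psubset_card_mono[rotated])
  qed
  ultimately show ?thesis by blast
qed

lemma minimal:
  fixes P :: "'a::real_vector set"
  shows "good R x y P \<Longrightarrow> \<exists>S. good R x y S \<and> \<not> affine_dependent S"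
proof (induction "card P" arbitrary: P rule: less_induct)
  case less
  show ?case
  proof (cases "affine_dependent P")
    case True
    then obtain P' where "good R x y P'" "card P' < card P" using reduce less.prems by blast
    then show ?thesis using less.hyps by blast
  next
    case False
    then show ?thesis using less.prems by blast
  qed
qed

lemma sumA: "finite T \<Longrightarrow> (\<Sum>p\<in>insert x T. (if p \<in> T then g p else 0)) = sum g T"
  by (simp add: sum.If_cases Int_absorb1 subset_insertI)

lemma sumB: "finite T \<Longrightarrow> (\<Sum>p\<in>insert x T. (if p = x then h else 0)) = h"
  by (simp add: sum.delta)

theorem lemma2:
  fixes R :: "(real ^ 'n) set" and y x :: "real ^ 'n"
  assumes "y \<in> rel_interior (convex hull R)"
    and "x \<in> R"
  shows "\<exists>S. S \<subseteq> R \<and> finite S \<and> \<not> affine_dependent S \<and> card S \<le> CARD('n) + 1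
             \<and> x \<in> S \<and> y \<in> rel_interior (convex hull S)"
proof -
  obtain e where e: "e > 0" and ball: "cball y e \<inter> affine hull (convex hull R) \<subseteq> convex hull R"
    using assms(1) mem_rel_interior_cball by blast
  have yaff: "y \<in> affine hull R"
    using assms(1) rel_interior_subset hull_subset[of R convex]
    by (metis affine_hull_convex_hull hull_inc subsetD)
  have xaff: "x \<in> affine hull R" using assms(2) by (simp add: hull_inc)
  define \<epsilon> where "\<epsilon> = e / (norm (y - x) + 1)"
  have epos: "\<epsilon> > 0" using e by (simp add: \<epsilon>_def) (smt (verit) norm_ge_zero divide_pos_pos)
  define z where "z = y + \<epsilon> *\<^sub>R (y - x)"
  have "norm (\<epsilon> *\<^sub>R (y - x)) \<le> e"
  proof -
    have "norm (\<epsilon> *\<^sub>R (y - x)) = e * norm (y - x) / (norm (y - x) + 1)"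
      using e by (simp add: \<epsilon>_def)
    also have "\<dots> \<le> e"
    proof -
      have np: "0 < norm (y - x) + 1" by (smt (verit) norm_ge_zero)
      have "e * norm (y - x) \<le> e * (norm (y - x) + 1)" using e by simp
      then show ?thesis using np by (simp add: divide_le_eq)
    qed
    finally show ?thesis .
  qed
  then have "z \<in> cball y e" by (simp add: z_def dist_norm)
  moreover have "z \<in> affine hull R"
  proof -
    have "z = (1 + \<epsilon>) *\<^sub>R y + (- \<epsilon>) *\<^sub>R x" by (simp add: z_def algebra_simps)
    moreover have aff: "\<And>a b u v. a \<in> affine hull R \<Longrightarrow> b \<in> affine hull R \<Longrightarrow> u + v = 1
        \<Longrightarrow> u *\<^sub>R a + v *\<^sub>R b \<in> affine hull R"
      using affine_affine_hull[of R] unfolding affine_def by blast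
    ultimately show ?thesis using aff[OF yaff xaff, of "1 + \<epsilon>" "- \<epsilon>"] by simp
  qed
  ultimately have "z \<in> convex hull R" using ball by (auto simp: affine_hull_convex_hull)
  then obtain T u where Tfin: "finite T" and TR: "T \<subseteq> R" and unn: "\<forall>p\<in>T. 0 \<le> u p"
    and us: "sum u T = 1" and uz: "(\<Sum>p\<in>T. u p *\<^sub>R p) = z"
    unfolding convex_hull_explicit by blast
  define T' where "T' = {p\<in>T. 0 < u p}"
  have T'sub: "T' \<subseteq> T" by (auto simp: T'_def)
  have zero: "\<forall>p\<in>T - T'. u p = 0" using unn by (force simp: T'_def)
  have us': "sum u T' = 1" using sum.mono_neutral_left[OF Tfin T'sub zero] us by simp
  have uz': "(\<Sum>p\<in>T'. u p *\<^sub>R p) = z"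
    using sum.mono_neutral_left[OF Tfin T'sub, of "\<lambda>p. u p *\<^sub>R p"] zero uz by simp
  have T'fin: "finite T'" using Tfin T'sub finite_subset by blast
  define P where "P = insert x T'"
  define w where "w p = ((if p \<in> T' then u p else 0) + (if p = x then \<epsilon> else 0)) / (1 + \<epsilon>)" for p
  have wpos: "\<forall>p\<in>P. 0 < w p"
    using epos by (auto simp: P_def w_def T'_def add_pos_nonneg intro!: divide_pos_pos)
  have A: "(\<Sum>p\<in>P. (if p \<in> T' then g p else 0)) = (\<Sum>p\<in>T'. g p)" for g :: "real^'n \<Rightarrow> 'b::comm_monoid_add"
    unfolding P_def by (rule sumA[OF T'fin])
  have B: "(\<Sum>p\<in>P. (if p = x then h else 0)) = h" for h :: "'b::comm_monoid_add"
    unfolding P_def by (rule sumB[OF T'fin])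
  have "sum w P = (sum u T' + \<epsilon>) / (1 + \<epsilon>)"
  proof -
    have "sum w P = (\<Sum>p\<in>P. (if p \<in> T' then u p else 0) + (if p = x then \<epsilon> else 0)) / (1 + \<epsilon>)"
      by (simp add: w_def sum_divide_distrib)
    also have "\<dots> = (sum u T' + \<epsilon>) / (1 + \<epsilon>)"
      by (simp only: sum.distrib A B)
    finally show ?thesis .
  qed
  then have ws: "sum w P = 1" using us' epos by simp
  have "(\<Sum>p\<in>P. w p *\<^sub>R p) = (1 / (1 + \<epsilon>)) *\<^sub>R ((\<Sum>p\<in>T'. u p *\<^sub>R p) + \<epsilon> *\<^sub>R x)"
  proof -
    have "(\<Sum>p\<in>P. w p *\<^sub>R p) = (1 / (1 + \<epsilon>)) *\<^sub>R (\<Sum>p\<in>P. ((if p \<in> T' then u p else 0) + (if p = x then \<epsilon> else 0)) *\<^sub>R p)"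
      by (simp add: w_def scaleR_sum_right divide_inverse_commute)
    also have "(\<Sum>p\<in>P. ((if p \<in> T' then u p else 0) + (if p = x then \<epsilon> else 0)) *\<^sub>R p)
        = (\<Sum>p\<in>T'. u p *\<^sub>R p) + \<epsilon> *\<^sub>R x"
    proof -
      have "(\<Sum>p\<in>P. ((if p \<in> T' then u p else 0) + (if p = x then \<epsilon> else 0)) *\<^sub>R p)
         = (\<Sum>p\<in>P. (if p \<in> T' then u p *\<^sub>R p else 0) + (if p = x then \<epsilon> *\<^sub>R x else 0))"
        by (rule sum.cong) (auto simp: scaleR_add_left)
      also have "\<dots> = (\<Sum>p\<in>T'. u p *\<^sub>R p) + \<epsilon> *\<^sub>R x"
        by (simp only: sum.distrib A B)
      finally show ?thesis .
    qed
    finally show ?thesis .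
  qed
  also have "\<dots> = y"
  proof -
    have "(\<Sum>p\<in>T'. u p *\<^sub>R p) + \<epsilon> *\<^sub>R x = (1 + \<epsilon>) *\<^sub>R y"
      by (simp add: uz' z_def algebra_simps)
    moreover have "1 + \<epsilon> \<noteq> 0" using epos by simp
    ultimately show ?thesis by simp
  qed
  finally have wy: "(\<Sum>p\<in>P. w p *\<^sub>R p) = y" .
  have "good R x y P"
    unfolding good_def using T'fin TR T'sub assms(2) wpos ws wy
    by (auto simp: P_def intro!: exI[of _ w])
  then obtain S where gS: "good R x y S" and ind: "\<not> affine_dependent S"
    using minimal by blast
  have "card S \<le> CARD('n) + 1"
  proof -
    have "int (card S) = aff_dim S + 1" using aff_dim_affine_independent[OF ind] by simp
    also have "\<dots> \<le> int (DIM(real^'n)) + 1" using aff_dim_le_DIM[of S] by simp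
    finally show ?thesis by simp
  qed
  moreover have "y \<in> rel_interior (convex hull S)"
    using gS unfolding rel_interior_convex_hull_explicit[OF ind] good_def by blast
  ultimately show ?thesis using gS ind unfolding good_def by blast
qed

end
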